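(* Let $A$ be a finite abelian group with Pontryagin dual $\hat A$, and let $\mu,\nu$ be probability measures on $A$ and $\hat A$ respectively. Let $(\mathcal{M},\tau)$ be a von Neumann algebra with a normal faithful tracial state and $U:A\to\mathcal{U}(\mathcal{M})$, $V:\hat A\to\mathcal{U}(\mathcal{M})$ group homomorphisms satisfying \[\int\|U(a)V(\chi)-\chi(a)V(\chi)U(a)\|_2^2\,d\mu(a)\,d\nu(\chi)\leq\varepsilon.\] Then \[\mathbf{E}_{a\in A,\chi\in\hat A}\|U(a)V(\chi)-\chi(a)V(\chi)U(a)\|_2^2\leq\kappa(\mu)\kappa(\nu)\varepsilon.\]
   Context: $\hat A$ is the group of characters (homomorphisms $A\to\{z\in\mathbf{C}:|z|=1\}$). $\|x\|_2=\tau(x^*x)^{1/2}$, $\mathbf{E}$ is the uniform average. For a probability measure $\mu$ on a finite group $G$, $\kappa(\mu)\in[0,+\infty]$ is the smallest constant $\kappa$ such that for every unitary representation $(\pi,\mathcal{H})$ of $G$ and every $\xi$, $\|\xi-P_{\mathcal{H}^\pi}\xi\|^2\leq\frac\kappa2\int\|\pi(g)\xi-\xi\|^2d\mu(g)$, with $P_{\mathcal{H}^\pi}$ the projection onto invariant vectors (if some $\kappa$ is infinite the right side is $+\infty$). *)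

theory Defs
  imports "HOL-Algebra.Algebra" "HOL-Library.Extended_Real"
begin

section \<open>Probability measures on finite sets\<close>

definition prob_on :: "'x set \<Rightarrow> ('x \<Rightarrow> real) \<Rightarrow> bool" where
  "prob_on S p \<longleftrightarrow> (\<forall>x\<in>S. 0 \<le> p x) \<and> sum p S = 1"

section \<open>Pontryagin dual of a finite abelian group\<close>

definition characters :: "('a, 'b) monoid_scheme \<Rightarrow> ('a \<Rightarrow> complex) set" where
  "characters A = {\<chi> \<in> carrier A \<rightarrow>\<^sub>E {z. cmod z = 1}.
      \<forall>x\<in>carrier A. \<forall>y\<in>carrier A. \<chi> (x \<otimes>\<^bsub>A\<^esub> y) = \<chi> x * \<chi> y}"

definition dual_group :: "('a, 'b) monoid_scheme \<Rightarrow> ('a \<Rightarrow> complex) monoid" where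
  "dual_group A = \<lparr>carrier = characters A,
      monoid.mult = (\<lambda>\<chi> \<psi>. \<lambda>a\<in>carrier A. \<chi> a * \<psi> a),
      monoid.one = (\<lambda>a\<in>carrier A. 1)\<rparr>"

section \<open>Unitary representations on finite-dimensional Hilbert spaces C^n and kappa\<close>

text \<open>Vectors of C^n are functions nat => complex vanishing outside {..<n}.\<close>

definition vsp :: "nat \<Rightarrow> (nat \<Rightarrow> complex) set" where
  "vsp n = {\<xi>. \<forall>i\<ge>n. \<xi> i = 0}"

definition cinner :: "nat \<Rightarrow> (nat \<Rightarrow> complex) \<Rightarrow> (nat \<Rightarrow> complex) \<Rightarrow> complex" where
  "cinner n \<xi> \<eta> = (\<Sum>i<n. cnj (\<xi> i) * \<eta> i)"

definition vnorm2 :: "nat \<Rightarrow> (nat \<Rightarrow> complex) \<Rightarrow> real" where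
  "vnorm2 n \<xi> = (\<Sum>i<n. (cmod (\<xi> i))\<^sup>2)"

definition unitary_rep ::
  "('g, 'b) monoid_scheme \<Rightarrow> nat \<Rightarrow> ('g \<Rightarrow> (nat \<Rightarrow> complex) \<Rightarrow> (nat \<Rightarrow> complex)) \<Rightarrow> bool" where
  "unitary_rep G n \<pi> \<longleftrightarrow>
     (\<forall>g\<in>carrier G.
        bij_betw (\<pi> g) (vsp n) (vsp n) \<and>
        (\<forall>\<xi>\<in>vsp n. \<forall>\<eta>\<in>vsp n. \<forall>c d.
            \<pi> g (\<lambda>i. c * \<xi> i + d * \<eta> i) = (\<lambda>i. c * \<pi> g \<xi> i + d * \<pi> g \<eta> i)) \<and>
        (\<forall>\<xi>\<in>vsp n. \<forall>\<eta>\<in>vsp n. cinner n (\<pi> g \<xi>) (\<pi> g \<eta>) = cinner n \<xi> \<eta>)) \<and>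
     (\<forall>g\<in>carrier G. \<forall>h\<in>carrier G. \<forall>\<xi>\<in>vsp n. \<pi> (g \<otimes>\<^bsub>G\<^esub> h) \<xi> = \<pi> g (\<pi> h \<xi>))"

definition invariants ::
  "('g, 'b) monoid_scheme \<Rightarrow> nat \<Rightarrow> ('g \<Rightarrow> (nat \<Rightarrow> complex) \<Rightarrow> (nat \<Rightarrow> complex)) \<Rightarrow> (nat \<Rightarrow> complex) set" where
  "invariants G n \<pi> = {\<eta> \<in> vsp n. \<forall>g\<in>carrier G. \<pi> g \<eta> = \<eta>}"

text \<open>Orthogonal projection onto the invariant vectors.\<close>
definition inv_proj ::
  "('g, 'b) monoid_scheme \<Rightarrow> nat \<Rightarrow> ('g \<Rightarrow> (nat \<Rightarrow> complex) \<Rightarrow> (nat \<Rightarrow> complex)) \<Rightarrow> (nat \<Rightarrow> complex) \<Rightarrow> (nat \<Rightarrow> complex)" where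
  "inv_proj G n \<pi> \<xi> = (THE \<eta>. \<eta> \<in> invariants G n \<pi> \<and>
       (\<forall>\<zeta>\<in>invariants G n \<pi>. cinner n \<zeta> (\<xi> - \<eta>) = 0))"

definition kappa_const :: "('g, 'b) monoid_scheme \<Rightarrow> ('g \<Rightarrow> real) \<Rightarrow> real \<Rightarrow> bool" where
  "kappa_const G \<mu> k \<longleftrightarrow> (\<forall>n \<pi> \<xi>. unitary_rep G n \<pi> \<longrightarrow> \<xi> \<in> vsp n \<longrightarrow>
      vnorm2 n (\<xi> - inv_proj G n \<pi> \<xi>)
        \<le> k / 2 * (\<Sum>g\<in>carrier G. \<mu> g * vnorm2 n (\<pi> g \<xi> - \<xi>)))"

text \<open>kappa(mu) in [0, +infinity]: the smallest admissible constant (infimum; +infinity if none).\<close>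
definition kappa :: "('g, 'b) monoid_scheme \<Rightarrow> ('g \<Rightarrow> real) \<Rightarrow> ereal" where
  "kappa G \<mu> = Inf {ereal k | k. 0 \<le> k \<and> kappa_const G \<mu> k}"

section \<open>Unital *-algebras with a faithful tracial state\<close>

definition tracial_star_algebra ::
  "(complex \<Rightarrow> 'm::ring_1 \<Rightarrow> 'm) \<Rightarrow> ('m \<Rightarrow> 'm) \<Rightarrow> ('m \<Rightarrow> complex) \<Rightarrow> bool" where
  "tracial_star_algebra sm st tau \<longleftrightarrow>
     (\<forall>x. sm 1 x = x) \<and> (\<forall>a b x. sm a (sm b x) = sm (a * b) x) \<and>
     (\<forall>a b x. sm (a + b) x = sm a x + sm b x) \<and> (\<forall>a x y. sm a (x + y) = sm a x + sm a y) \<and>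
     (\<forall>a x y. sm a (x * y) = sm a x * y \<and> sm a (x * y) = x * sm a y) \<and>
     (\<forall>x. st (st x) = x) \<and> (\<forall>x y. st (x + y) = st x + st y) \<and>
     (\<forall>a x. st (sm a x) = sm (cnj a) (st x)) \<and> (\<forall>x y. st (x * y) = st y * st x) \<and>
     (\<forall>x y. tau (x + y) = tau x + tau y) \<and> (\<forall>a x. tau (sm a x) = a * tau x) \<and>
     (\<forall>x y. tau (x * y) = tau (y * x)) \<and> tau 1 = 1 \<and>
     (\<forall>x. Im (tau (st x * x)) = 0 \<and> 0 \<le> Re (tau (st x * x))) \<and>
     (\<forall>x. tau (st x * x) = 0 \<longrightarrow> x = 0)"

definition unitaries :: "('m::ring_1 \<Rightarrow> 'm) \<Rightarrow> 'm set" where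
  "unitaries st = {u. st u * u = 1 \<and> u * st u = 1}"

text \<open>Squared 2-norm: norm2sq x = tau(x^* x) = ||x||_2^2.\<close>
definition norm2sq :: "('m::ring_1 \<Rightarrow> 'm) \<Rightarrow> ('m \<Rightarrow> complex) \<Rightarrow> 'm \<Rightarrow> real" where
  "norm2sq st tau x = Re (tau (st x * x))"

end

theory Submission
  imports Defs
begin


lemma kappa_real:
  assumes ninf: "kappa G \<mu> \<noteq> \<infinity>" and mu: "\<forall>g\<in>carrier G. 0 \<le> \<mu> g"
  shows "kappa_const G \<mu> (real_of_ereal (kappa G \<mu>)) \<and> 0 \<le> real_of_ereal (kappa G \<mu>)"
proof -
  define K where "K = {ereal k | k. 0 \<le> k \<and> kappa_const G \<mu> k}"
  have kK: "kappa G \<mu> = Inf K" unfolding K_def kappa_def by simp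
  have ne: "K \<noteq> {}" using ninf kK by (auto simp: top_ereal_def)
  then obtain k0 where k0: "0 \<le> k0" "kappa_const G \<mu> k0" unfolding K_def by blast
  have ge0: "0 \<le> Inf K" unfolding K_def by (rule Inf_greatest) auto
  have "Inf K \<noteq> \<infinity>" using ninf kK by simp
  then obtain r where r: "Inf K = ereal r" using ge0 by (cases "Inf K") auto
  have r0: "0 \<le> r" using ge0 r by simp
  have "kappa_const G \<mu> r"
    unfolding kappa_const_def
  proof (intro allI impI)
    fix n \<pi> \<xi> assume R: "unitary_rep G n \<pi>" and x: "\<xi> \<in> vsp n"
    define L where "L = vnorm2 n (\<xi> - inv_proj G n \<pi> \<xi>)"
    define Sm where "Sm = (\<Sum>g\<in>carrier G. \<mu> g * vnorm2 n (\<pi> g \<xi> - \<xi>))"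
    have allk: "L \<le> k / 2 * Sm" if "0 \<le> k" "kappa_const G \<mu> k" for k
      using that R x unfolding kappa_const_def L_def Sm_def by blast
    have Sm0: "0 \<le> Sm" unfolding Sm_def
      by (rule sum_nonneg) (use mu in \<open>auto simp: vnorm2_def intro!: mult_nonneg_nonneg sum_nonneg\<close>)
    show "L \<le> r / 2 * Sm"
    proof (cases "Sm = 0")
      case True then show ?thesis using allk[OF k0] by simp
    next
      case False
      then have Sp: "Sm > 0" using Sm0 by simp
      have "ereal (2 * L / Sm) \<le> Inf K"
      proof (rule Inf_greatest)
        fix z assume "z \<in> K"
        then obtain k where z: "z = ereal k" "0 \<le> k" "kappa_const G \<mu> k" unfolding K_def by blast
        have "2 * L / Sm \<le> k" using allk[OF z(2,3)] Sp by (simp add: field_simps)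
        then show "ereal (2 * L / Sm) \<le> z" using z by simp
      qed
      then have "2 * L / Sm \<le> r" using r by simp
      then show ?thesis using Sp by (simp add: field_simps)
    qed
  qed
  then show ?thesis using kK r r0 by simp
qed

lemma char_mult: "\<chi> \<in> characters A \<Longrightarrow> x \<in> carrier A \<Longrightarrow> y \<in> carrier A \<Longrightarrow> \<chi> (x \<otimes>\<^bsub>A\<^esub> y) = \<chi> x * \<chi> y"
  unfolding characters_def by blast
lemma char_norm: "\<chi> \<in> characters A \<Longrightarrow> x \<in> carrier A \<Longrightarrow> cmod (\<chi> x) = 1"
  unfolding characters_def by (auto simp: PiE_def Pi_def)
lemma char_ext: "\<chi> \<in> characters A \<Longrightarrow> \<chi> \<in> extensional (carrier A)"
  unfolding characters_def by (auto simp: PiE_def)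
lemma cnj_unit: "cmod z = 1 \<Longrightarrow> cnj z * z = 1"
  by (metis complex_norm_square mult.commute of_real_1 power_one)
lemma char_cnj: "\<chi> \<in> characters A \<Longrightarrow> x \<in> carrier A \<Longrightarrow> cnj (\<chi> x) * \<chi> x = 1"
  by (rule cnj_unit[OF char_norm])
lemma char_one: assumes "group A" "\<chi> \<in> characters A" shows "\<chi> \<one>\<^bsub>A\<^esub> = 1"
proof -
  interpret group A by fact
  have "\<chi> \<one>\<^bsub>A\<^esub> = \<chi> \<one>\<^bsub>A\<^esub> * \<chi> \<one>\<^bsub>A\<^esub>" using char_mult[OF assms(2), of "\<one>\<^bsub>A\<^esub>" "\<one>\<^bsub>A\<^esub>"] by simp
  moreover have "\<chi> \<one>\<^bsub>A\<^esub> \<noteq> 0" using char_norm[OF assms(2), of "\<one>\<^bsub>A\<^esub>"] by auto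
  ultimately show ?thesis by simp
qed

lemma dual_carrier: "carrier (dual_group A) = characters A" by (simp add: dual_group_def)
lemma dual_mult: "\<chi> \<otimes>\<^bsub>dual_group A\<^esub> \<psi> = (\<lambda>a\<in>carrier A. \<chi> a * \<psi> a)" by (simp add: dual_group_def)
lemma dual_one: "\<one>\<^bsub>dual_group A\<^esub> = (\<lambda>a\<in>carrier A. 1)" by (simp add: dual_group_def)

lemma dual_group: assumes "group A" shows "group (dual_group A)"
proof -
  interpret A: group A by fact
  show ?thesis
  proof (rule groupI)
    fix \<chi> \<psi> assume c: "\<chi> \<in> carrier (dual_group A)" "\<psi> \<in> carrier (dual_group A)"
    then show "\<chi> \<otimes>\<^bsub>dual_group A\<^esub> \<psi> \<in> carrier (dual_group A)"
      unfolding dual_carrier dual_mult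
      by (auto simp: characters_def PiE_def Pi_def norm_mult mult_ac)
  next
    show "\<one>\<^bsub>dual_group A\<^esub> \<in> carrier (dual_group A)"
      unfolding dual_carrier dual_one by (auto simp: characters_def)
  next
    fix \<chi> \<psi> \<phi> assume "\<chi> \<in> carrier (dual_group A)" "\<psi> \<in> carrier (dual_group A)" "\<phi> \<in> carrier (dual_group A)"
    show "\<chi> \<otimes>\<^bsub>dual_group A\<^esub> \<psi> \<otimes>\<^bsub>dual_group A\<^esub> \<phi> = \<chi> \<otimes>\<^bsub>dual_group A\<^esub> (\<psi> \<otimes>\<^bsub>dual_group A\<^esub> \<phi>)"
      unfolding dual_mult by (auto simp: fun_eq_iff mult_ac)
  next
    fix \<chi> assume c: "\<chi> \<in> carrier (dual_group A)"
    then show "\<one>\<^bsub>dual_group A\<^esub> \<otimes>\<^bsub>dual_group A\<^esub> \<chi> = \<chi>"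
      unfolding dual_mult dual_one dual_carrier using char_ext[of \<chi> A]
      by (auto simp: fun_eq_iff extensional_def)
  next
    fix \<chi> assume c: "\<chi> \<in> carrier (dual_group A)"
    then have ch: "\<chi> \<in> characters A" by (simp add: dual_carrier)
    define \<psi> where "\<psi> = (\<lambda>a\<in>carrier A. cnj (\<chi> a))"
    have "\<psi> \<in> characters A"
      using ch unfolding \<psi>_def characters_def by (auto simp: PiE_def Pi_def)
    moreover have "\<psi> \<otimes>\<^bsub>dual_group A\<^esub> \<chi> = \<one>\<^bsub>dual_group A\<^esub>"
      unfolding dual_mult dual_one \<psi>_def using char_cnj[OF ch] by (auto simp: fun_eq_iff)
    ultimately show "\<exists>y\<in>carrier (dual_group A). y \<otimes>\<^bsub>dual_group A\<^esub> \<chi> = \<one>\<^bsub>dual_group A\<^esub>"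
      by (auto simp: dual_carrier)
  qed
qed



lemma cnj_mult_self: "cnj z * z = complex_of_real ((cmod z)\<^sup>2)"
  by (metis complex_norm_square mult.commute of_real_power)

lemma cinner_self: "cinner n a a = complex_of_real (vnorm2 n a)"
  by (simp add: cinner_def vnorm2_def cnj_mult_self)

lemma vnorm2_Re: "vnorm2 n a = Re (cinner n a a)"
  by (simp add: cinner_self)

lemma vnorm2_nonneg: "0 \<le> vnorm2 n a"
  by (simp add: vnorm2_def sum_nonneg)

lemma cinner_diffr: "cinner n a (b - c) = cinner n a b - cinner n a c"
  by (simp add: cinner_def right_diff_distrib sum_subtractf)
lemma cinner_diffl: "cinner n (a - b) c = cinner n a c - cinner n b c"
  by (simp add: cinner_def left_diff_distrib sum_subtractf)
lemma cinner_cnj: "cinner n b a = cnj (cinner n a b)"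
  by (simp add: cinner_def mult.commute)

lemma cinner_avg: "cinner n z (\<lambda>i. c * (\<Sum>g\<in>F. f g i)) = c * (\<Sum>g\<in>F. cinner n z (f g))"
  unfolding cinner_def by (simp add: sum_distrib_left sum.swap[of _ F] algebra_simps)

lemma vnorm2_zero: "a \<in> vsp n \<Longrightarrow> vnorm2 n a = 0 \<Longrightarrow> a = (\<lambda>i. 0)"
proof
  fix i assume a: "a \<in> vsp n" and z: "vnorm2 n a = 0"
  show "a i = 0"
  proof (cases "i < n")
    case True
    have "\<forall>j\<in>{..<n}. (cmod (a j))\<^sup>2 = 0"
      using z unfolding vnorm2_def by (subst sum_nonneg_eq_0_iff[symmetric]) auto
    then show ?thesis using True by simp
  next
    case False then show ?thesis using a by (simp add: vsp_def)
  qed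
qed

context
  fixes G :: "('g, 'b) monoid_scheme" and n :: nat and \<rho> :: "'g \<Rightarrow> (nat \<Rightarrow> complex) \<Rightarrow> (nat \<Rightarrow> complex)"
  assumes grp: "group G" and fin: "finite (carrier G)" and R: "unitary_rep G n \<rho>"
begin

lemma rho_vsp: "g \<in> carrier G \<Longrightarrow> \<xi> \<in> vsp n \<Longrightarrow> \<rho> g \<xi> \<in> vsp n"
  using R unfolding unitary_rep_def bij_betw_def by blast

lemma rho_lin: "g \<in> carrier G \<Longrightarrow> \<xi> \<in> vsp n \<Longrightarrow> \<eta> \<in> vsp n \<Longrightarrow>
   \<rho> g (\<lambda>i. c * \<xi> i + d * \<eta> i) = (\<lambda>i. c * \<rho> g \<xi> i + d * \<rho> g \<eta> i)"
  using R unfolding unitary_rep_def by blast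

lemma rho_cinner: "g \<in> carrier G \<Longrightarrow> \<xi> \<in> vsp n \<Longrightarrow> \<eta> \<in> vsp n \<Longrightarrow>
   cinner n (\<rho> g \<xi>) (\<rho> g \<eta>) = cinner n \<xi> \<eta>"
  using R unfolding unitary_rep_def by blast

lemma rho_mult: "g \<in> carrier G \<Longrightarrow> h \<in> carrier G \<Longrightarrow> \<xi> \<in> vsp n \<Longrightarrow>
   \<rho> (g \<otimes>\<^bsub>G\<^esub> h) \<xi> = \<rho> g (\<rho> h \<xi>)"
  using R unfolding unitary_rep_def by blast

lemma zero_vsp: "(\<lambda>i. 0) \<in> vsp n" by (simp add: vsp_def)

lemma rho_zero: "g \<in> carrier G \<Longrightarrow> \<rho> g (\<lambda>i. 0) = (\<lambda>i. 0)"
  using rho_lin[OF _ zero_vsp zero_vsp, of g 0 0] by simp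

lemma sum_vsp: "(\<forall>h\<in>F. f h \<in> vsp n) \<Longrightarrow> (\<lambda>i. \<Sum>h\<in>F. f h i) \<in> vsp n"
  by (simp add: vsp_def)

lemma rho_sum: "finite F \<Longrightarrow> g \<in> carrier G \<Longrightarrow> (\<forall>h\<in>F. f h \<in> vsp n) \<Longrightarrow>
   \<rho> g (\<lambda>i. \<Sum>h\<in>F. f h i) = (\<lambda>i. \<Sum>h\<in>F. \<rho> g (f h) i)"
proof (induction F rule: finite_induct)
  case empty then show ?case by (simp add: rho_zero)
next
  case (insert x F)
  have "\<rho> g (\<lambda>i. \<Sum>h\<in>insert x F. f h i) = \<rho> g (\<lambda>i. 1 * f x i + 1 * (\<Sum>h\<in>F. f h i))"
    using insert by simp
  also have "\<dots> = (\<lambda>i. 1 * \<rho> g (f x) i + 1 * \<rho> g (\<lambda>i. \<Sum>h\<in>F. f h i) i)"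
    using insert by (intro rho_lin) (auto intro: sum_vsp)
  finally show ?case using insert by simp
qed

lemma rho_scale: "g \<in> carrier G \<Longrightarrow> \<xi> \<in> vsp n \<Longrightarrow> \<rho> g (\<lambda>i. c * \<xi> i) = (\<lambda>i. c * \<rho> g \<xi> i)"
  using rho_lin[OF _ _ zero_vsp, of g \<xi> c 0] by simp

lemma rho_diff: "g \<in> carrier G \<Longrightarrow> \<xi> \<in> vsp n \<Longrightarrow> \<eta> \<in> vsp n \<Longrightarrow> \<rho> g (\<xi> - \<eta>) = \<rho> g \<xi> - \<rho> g \<eta>"
  using rho_lin[of g \<xi> \<eta> 1 "-1"] by (simp add: fun_diff_def)

lemma diff_vsp: "\<xi> \<in> vsp n \<Longrightarrow> \<eta> \<in> vsp n \<Longrightarrow> \<xi> - \<eta> \<in> vsp n"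
  by (simp add: vsp_def)

definition avg :: "(nat \<Rightarrow> complex) \<Rightarrow> (nat \<Rightarrow> complex)" where
  "avg \<xi> = (\<lambda>i. (1 / of_nat (card (carrier G))) * (\<Sum>g\<in>carrier G. \<rho> g \<xi> i))"

lemma card_pos: "card (carrier G) > 0"
  using fin group.subgroup_self[OF grp] subgroup.one_closed card_gt_0_iff by blast

lemma avg_vsp: "\<xi> \<in> vsp n \<Longrightarrow> avg \<xi> \<in> vsp n"
  using rho_vsp by (simp add: avg_def vsp_def)

lemma avg_inv: "\<xi> \<in> vsp n \<Longrightarrow> avg \<xi> \<in> invariants G n \<rho>"
proof -
  assume x: "\<xi> \<in> vsp n"
  interpret G: group G by (rule grp)
  have "\<rho> h (avg \<xi>) = avg \<xi>" if h: "h \<in> carrier G" for h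
  proof -
    have "\<rho> h (avg \<xi>) = (\<lambda>i. (1 / of_nat (card (carrier G))) * \<rho> h (\<lambda>i. \<Sum>g\<in>carrier G. \<rho> g \<xi> i) i)"
      unfolding avg_def using h x by (intro rho_scale sum_vsp) (auto intro: rho_vsp)
    also have "\<dots> = (\<lambda>i. (1 / of_nat (card (carrier G))) * (\<Sum>g\<in>carrier G. \<rho> h (\<rho> g \<xi>) i))"
      using h x fin by (subst rho_sum) (auto intro: rho_vsp)
    also have "\<dots> = (\<lambda>i. (1 / of_nat (card (carrier G))) * (\<Sum>g\<in>carrier G. \<rho> (h \<otimes>\<^bsub>G\<^esub> g) \<xi> i))"
      using h x by (simp add: rho_mult)
    also have "\<dots> = avg \<xi>"
    proof -
      have "(\<Sum>g\<in>carrier G. \<rho> (h \<otimes>\<^bsub>G\<^esub> g) \<xi> i) = (\<Sum>g\<in>carrier G. \<rho> g \<xi> i)" for i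
        by (rule sum.reindex_bij_witness[of _ "\<lambda>y. inv\<^bsub>G\<^esub> h \<otimes>\<^bsub>G\<^esub> y" "\<lambda>g. h \<otimes>\<^bsub>G\<^esub> g"])
          (use h in \<open>auto simp: G.m_assoc[symmetric]\<close>)
      then show ?thesis by (simp add: avg_def)
    qed
    finally show ?thesis .
  qed
  then show ?thesis using avg_vsp[OF x] by (simp add: invariants_def)
qed

lemma inv_cinner: "\<zeta> \<in> invariants G n \<rho> \<Longrightarrow> \<xi> \<in> vsp n \<Longrightarrow> g \<in> carrier G \<Longrightarrow>
   cinner n \<zeta> (\<rho> g \<xi>) = cinner n \<zeta> \<xi>"
  using rho_cinner[of g \<zeta> \<xi>] by (simp add: invariants_def)

lemma avg_cinner: "\<xi> \<in> vsp n \<Longrightarrow> cinner n z (avg \<xi>) = (1 / of_nat (card (carrier G))) * (\<Sum>g\<in>carrier G. cinner n z (\<rho> g \<xi>))"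
  unfolding avg_def by (rule cinner_avg)

lemma avg_orth: "\<xi> \<in> vsp n \<Longrightarrow> \<zeta> \<in> invariants G n \<rho> \<Longrightarrow> cinner n \<zeta> (\<xi> - avg \<xi>) = 0"
proof -
  assume x: "\<xi> \<in> vsp n" and z: "\<zeta> \<in> invariants G n \<rho>"
  have "cinner n \<zeta> (avg \<xi>) = (1 / of_nat (card (carrier G))) * (\<Sum>g\<in>carrier G. cinner n \<zeta> \<xi>)"
    using avg_cinner[OF x] inv_cinner[OF z x] by simp
  also have "\<dots> = cinner n \<zeta> \<xi>" using card_pos by simp
  finally show ?thesis by (simp add: cinner_diffr)
qed

lemma inv_proj_avg: "\<xi> \<in> vsp n \<Longrightarrow> inv_proj G n \<rho> \<xi> = avg \<xi>"
  unfolding inv_proj_def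
proof (rule the1_equality)
  assume x: "\<xi> \<in> vsp n"
  let ?P = "\<lambda>\<eta>. \<eta> \<in> invariants G n \<rho> \<and> (\<forall>\<zeta>\<in>invariants G n \<rho>. cinner n \<zeta> (\<xi> - \<eta>) = 0)"
  show P: "?P (avg \<xi>)" using avg_inv[OF x] avg_orth[OF x] by blast
  show "\<exists>!\<eta>. ?P \<eta>"
  proof (rule ex1I[of _ "avg \<xi>"])
    show "?P (avg \<xi>)" by (rule P)
    fix \<eta> assume e: "?P \<eta>"
    define \<delta> where "\<delta> = \<eta> - avg \<xi>"
    have ev: "\<eta> \<in> vsp n" using e by (simp add: invariants_def)
    have av: "avg \<xi> \<in> vsp n" by (rule avg_vsp[OF x])
    have dv: "\<delta> \<in> vsp n" unfolding \<delta>_def using ev av by (rule diff_vsp)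
    have di: "\<delta> \<in> invariants G n \<rho>"
      using e avg_inv[OF x] dv unfolding \<delta>_def invariants_def by (auto simp: rho_diff)
    have "cinner n \<delta> (\<xi> - \<eta>) = 0" using e di by blast
    moreover have "cinner n \<delta> (\<xi> - avg \<xi>) = 0" using P di by blast
    ultimately have "cinner n \<delta> \<delta> = 0"
      unfolding \<delta>_def by (simp add: cinner_diffr)
    then have "vnorm2 n \<delta> = 0" by (simp add: cinner_self)
    then have "\<delta> = (\<lambda>i. 0)" using vnorm2_zero dv by blast
    then show "\<eta> = avg \<xi>" unfolding \<delta>_def fun_diff_def by (auto simp: fun_eq_iff)
  qed
qed

lemma rep_identity:
  assumes x: "\<xi> \<in> vsp n"
  shows "(\<Sum>g\<in>carrier G. vnorm2 n (\<rho> g \<xi> - \<xi>)) = 2 * real (card (carrier G)) * vnorm2 n (\<xi> - inv_proj G n \<rho> \<xi>)"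
proof -
  let ?N = "real (card (carrier G))"
  let ?P = "avg \<xi>"
  have av: "?P \<in> vsp n" by (rule avg_vsp[OF x])
  have c1: "cinner n \<xi> ?P = (1 / of_real ?N) * (\<Sum>g\<in>carrier G. cinner n \<xi> (\<rho> g \<xi>))"
    using avg_cinner[OF x] by simp
  have sumc: "(\<Sum>g\<in>carrier G. cinner n \<xi> (\<rho> g \<xi>)) = of_real ?N * cinner n \<xi> ?P"
    using c1 card_pos by simp
  have each: "vnorm2 n (\<rho> g \<xi> - \<xi>) = 2 * vnorm2 n \<xi> - 2 * Re (cinner n \<xi> (\<rho> g \<xi>))"
    if g: "g \<in> carrier G" for g
  proof -
    have "cinner n (\<rho> g \<xi> - \<xi>) (\<rho> g \<xi> - \<xi>) =
        cinner n (\<rho> g \<xi>) (\<rho> g \<xi>) - cinner n (\<rho> g \<xi>) \<xi> - cinner n \<xi> (\<rho> g \<xi>) + cinner n \<xi> \<xi>"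
      by (simp add: cinner_diffl cinner_diffr)
    also have "\<dots> = 2 * cinner n \<xi> \<xi> - cnj (cinner n \<xi> (\<rho> g \<xi>)) - cinner n \<xi> (\<rho> g \<xi>)"
      using rho_cinner[OF g x x] cinner_cnj[of n "\<rho> g \<xi>" \<xi>] by simp
    finally have "vnorm2 n (\<rho> g \<xi> - \<xi>) = Re (2 * cinner n \<xi> \<xi> - cnj (cinner n \<xi> (\<rho> g \<xi>)) - cinner n \<xi> (\<rho> g \<xi>))"
      by (simp add: vnorm2_Re)
    then show ?thesis by (simp add: vnorm2_Re)
  qed
  have lhs: "(\<Sum>g\<in>carrier G. vnorm2 n (\<rho> g \<xi> - \<xi>)) = 2 * ?N * vnorm2 n \<xi> - 2 * ?N * Re (cinner n \<xi> ?P)"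
  proof -
    have "(\<Sum>g\<in>carrier G. vnorm2 n (\<rho> g \<xi> - \<xi>)) = (\<Sum>g\<in>carrier G. 2 * vnorm2 n \<xi> - 2 * Re (cinner n \<xi> (\<rho> g \<xi>)))"
      by (rule sum.cong) (auto simp: each)
    also have "\<dots> = 2 * ?N * vnorm2 n \<xi> - 2 * Re (\<Sum>g\<in>carrier G. cinner n \<xi> (\<rho> g \<xi>))"
      by (simp add: sum_subtractf sum_distrib_left[symmetric] Re_sum)
    also have "\<dots> = 2 * ?N * vnorm2 n \<xi> - 2 * ?N * Re (cinner n \<xi> ?P)"
      by (simp add: sumc)
    finally show ?thesis .
  qed
  have orth: "cinner n ?P (\<xi> - ?P) = 0" using avg_orth[OF x avg_inv[OF x]] .
  have "cinner n (\<xi> - ?P) (\<xi> - ?P) = cinner n \<xi> \<xi> - cinner n \<xi> ?P - (cinner n ?P \<xi> - cinner n ?P ?P)"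
    by (simp add: cinner_diffl cinner_diffr)
  also have "cinner n ?P \<xi> - cinner n ?P ?P = 0" using orth by (simp add: cinner_diffr)
  finally have eq: "cinner n (\<xi> - ?P) (\<xi> - ?P) = cinner n \<xi> \<xi> - cinner n \<xi> ?P" by (simp only: diff_zero)
  have "vnorm2 n (\<xi> - ?P) = Re (cinner n \<xi> \<xi> - cinner n \<xi> ?P)"
    unfolding vnorm2_Re[of n "\<xi> - ?P"] eq ..
  also have "\<dots> = vnorm2 n \<xi> - Re (cinner n \<xi> ?P)" by (simp add: vnorm2_Re)
  finally have "vnorm2 n (\<xi> - ?P) = vnorm2 n \<xi> - Re (cinner n \<xi> ?P)" .
  then show ?thesis unfolding inv_proj_avg[OF x] lhs by (simp add: right_diff_distrib)
qed

end


context
  fixes sm :: "complex \<Rightarrow> 'm::ring_1 \<Rightarrow> 'm" and st :: "'m \<Rightarrow> 'm" and tau :: "'m \<Rightarrow> complex"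
  assumes T: "tracial_star_algebra sm st tau"
begin

lemmas TT = T[unfolded tracial_star_algebra_def]

lemma sm_one: "sm 1 x = x" using TT by metis
lemma sm_sm: "sm a (sm b x) = sm (a * b) x" using TT by metis
lemma sm_addl: "sm (a + b) x = sm a x + sm b x" using TT by metis
lemma sm_addr: "sm a (x + y) = sm a x + sm a y" using TT by metis
lemma sm_multl: "sm a x * y = sm a (x * y)" using TT by metis
lemma sm_multr: "x * sm a y = sm a (x * y)" using TT by metis
lemma st_st: "st (st x) = x" using TT by metis
lemma st_add: "st (x + y) = st x + st y" using TT by metis
lemma st_sm: "st (sm a x) = sm (cnj a) (st x)" using TT by metis
lemma st_mult: "st (x * y) = st y * st x" using TT by metis
lemma tau_add: "tau (x + y) = tau x + tau y" using TT by metis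
lemma tau_sm: "tau (sm a x) = a * tau x" using TT by metis
lemma tau_comm: "tau (x * y) = tau (y * x)" using TT by metis
lemma tau_pos_Im: "Im (tau (st x * x)) = 0" using TT by metis
lemma tau_pos_Re: "0 \<le> Re (tau (st x * x))" using TT by metis
lemma tau_faith: "tau (st x * x) = 0 \<Longrightarrow> x = 0" using TT by metis

lemma sm_zerol: "sm 0 x = 0"
  using sm_addl[of 0 0 x] by simp
lemma sm_zeror: "sm a 0 = 0"
  using sm_addr[of a 0 0] by simp
lemma sm_minusr: "sm a (- x) = - sm a x"
  using sm_addr[of a x "-x"] by (simp add: sm_zeror) (metis minus_unique)
lemma sm_diffr: "sm a (x - y) = sm a x - sm a y"
  unfolding diff_conv_add_uminus by (simp only: sm_addr sm_minusr)
lemma sm_minusl: "sm (- a) x = - sm a x"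
  using sm_addl[of a "-a" x] by (simp add: sm_zerol) (metis minus_unique)
lemma sm_diffl: "sm (a - b) x = sm a x - sm b x"
  unfolding diff_conv_add_uminus by (simp only: sm_addl sm_minusl)
lemma st_zero: "st 0 = 0"
  using st_add[of 0 0] by simp
lemma st_minus: "st (- x) = - st x"
  using st_add[of x "-x"] by (simp add: st_zero) (metis minus_unique)
lemma st_diff: "st (x - y) = st x - st y"
  unfolding diff_conv_add_uminus by (simp only: st_add st_minus)
lemma tau_zero: "tau 0 = 0"
  using tau_add[of 0 0] by simp
lemma tau_minus: "tau (- x) = - tau x"
  using tau_add[of x "-x"] by (simp add: tau_zero) (metis minus_unique)
lemma tau_diff: "tau (x - y) = tau x - tau y"
  unfolding diff_conv_add_uminus by (simp only: tau_add tau_minus)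
lemma sm_sumr: "sm a (\<Sum>i\<in>F. f i) = (\<Sum>i\<in>F. sm a (f i))"
  by (induction F rule: infinite_finite_induct) (auto simp: sm_zeror sm_addr)
lemma sm_suml: "sm (\<Sum>i\<in>F. f i) x = (\<Sum>i\<in>F. sm (f i) x)"
  by (induction F rule: infinite_finite_induct) (auto simp: sm_zerol sm_addl)
lemma tau_sum: "tau (\<Sum>i\<in>F. f i) = (\<Sum>i\<in>F. tau (f i))"
  by (induction F rule: infinite_finite_induct) (auto simp: tau_zero tau_add)
lemma st_sum: "st (\<Sum>i\<in>F. f i) = (\<Sum>i\<in>F. st (f i))"
  by (induction F rule: infinite_finite_induct) (auto simp: st_zero st_add)

definition ip :: "'m \<Rightarrow> 'm \<Rightarrow> complex" where "ip x y = tau (st x * y)"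
definition nrm :: "'m \<Rightarrow> real" where "nrm x = Re (ip x x)"

lemma ip_addr: "ip x (y + z) = ip x y + ip x z"
  by (simp add: ip_def distrib_left tau_add)
lemma ip_addl: "ip (x + y) z = ip x z + ip y z"
  by (simp add: ip_def distrib_right tau_add st_add)
lemma ip_smr: "ip x (sm a y) = a * ip x y"
  by (simp add: ip_def sm_multr tau_sm)
lemma ip_sml: "ip (sm a x) y = cnj a * ip x y"
  by (simp add: ip_def st_sm sm_multl tau_sm)
lemma ip_diffr: "ip x (y - z) = ip x y - ip x z"
  by (simp add: ip_def right_diff_distrib tau_diff)
lemma ip_diffl: "ip (x - y) z = ip x z - ip y z"
  by (simp add: ip_def left_diff_distrib tau_diff st_diff)
lemma ip_zeror: "ip x 0 = 0" by (simp add: ip_def tau_zero)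
lemma ip_zerol: "ip 0 x = 0" by (simp add: ip_def tau_zero st_zero)
lemma ip_sumr: "ip x (\<Sum>i\<in>F. f i) = (\<Sum>i\<in>F. ip x (f i))"
  by (induction F rule: infinite_finite_induct) (auto simp: ip_zeror ip_addr)
lemma ip_suml: "ip (\<Sum>i\<in>F. f i) x = (\<Sum>i\<in>F. ip (f i) x)"
  by (induction F rule: infinite_finite_induct) (auto simp: ip_zerol ip_addl)
lemma ip_self_Im: "Im (ip x x) = 0" by (simp add: ip_def tau_pos_Im)
lemma ip_self: "ip x x = complex_of_real (nrm x)"
  using ip_self_Im by (simp add: nrm_def complex_eq_iff)
lemma nrm_nonneg: "0 \<le> nrm x" by (simp add: nrm_def ip_def tau_pos_Re)
lemma nrm_zero_iff: "nrm x = 0 \<longleftrightarrow> x = 0"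
proof
  assume "nrm x = 0"
  then have "ip x x = 0" by (simp add: ip_self)
  then show "x = 0" using tau_faith by (simp add: ip_def)
qed (simp add: nrm_def ip_zerol)

lemma ip_sym: "ip y x = cnj (ip x y)"
proof -
  have r1: "Im (ip (x + y) (x + y)) = 0" by (rule ip_self_Im)
  have r2: "Im (ip (x + sm \<i> y) (x + sm \<i> y)) = 0" by (rule ip_self_Im)
  have e1: "ip (x + y) (x + y) = ip x x + ip x y + ip y x + ip y y"
    by (simp add: ip_addl ip_addr)
  have e2: "ip (x + sm \<i> y) (x + sm \<i> y) = ip x x + \<i> * ip x y - \<i> * ip y x + ip y y"
    by (simp add: ip_addl ip_addr ip_sml ip_smr) (simp add: algebra_simps)
  have a: "Im (ip x y) + Im (ip y x) = 0" using r1 e1 by (simp add: ip_self_Im)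
  have b: "Re (ip x y) - Re (ip y x) = 0" using r2 e2 by (simp add: ip_self_Im)
  show ?thesis using a b by (simp add: complex_eq_iff)
qed

lemma nrm_sm: "nrm (sm a x) = (cmod a)\<^sup>2 * nrm x"
proof -
  have "ip (sm a x) (sm a x) = (cnj a * a) * ip x x" by (simp add: ip_sml ip_smr)
  also have "cnj a * a = complex_of_real ((cmod a)\<^sup>2)"
    by (metis complex_norm_square mult.commute of_real_power)
  finally show ?thesis by (metis ip_self of_real_eq_iff of_real_mult)
qed

lemma nrm_unit_left: "st u * u = 1 \<Longrightarrow> nrm (u * x) = nrm x"
proof -
  assume u: "st u * u = 1"
  have "st (u * x) * (u * x) = st x * (st u * u) * x" by (simp add: st_mult mult.assoc)
  then show ?thesis using u by (simp add: nrm_def ip_def)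
qed

lemma nrm_unit_right: "u * st u = 1 \<Longrightarrow> nrm (x * u) = nrm x"
proof -
  assume u: "u * st u = 1"
  have "tau (st (x * u) * (x * u)) = tau ((st u * st x * x) * u)"
    by (simp add: st_mult mult.assoc)
  also have "\<dots> = tau (u * (st u * st x * x))" by (rule tau_comm)
  also have "\<dots> = tau (st x * x)" using u by (simp add: mult.assoc[symmetric])
  finally show ?thesis by (simp add: nrm_def ip_def)
qed


definition spanS :: "'i set \<Rightarrow> ('i \<Rightarrow> 'm) \<Rightarrow> 'm set" where
  "spanS I v = {y. \<exists>c. y = (\<Sum>i\<in>I. sm (c i) (v i))}"

lemma span_repr: "(\<Sum>i\<in>I. sm (c i) (v i)) \<in> spanS I v"
  unfolding spanS_def by auto

lemma span_zero: "0 \<in> spanS I v"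
  unfolding spanS_def by (rule CollectI, rule exI[of _ "\<lambda>_. 0"]) (simp add: sm_zerol)

lemma span_add: "y \<in> spanS I v \<Longrightarrow> z \<in> spanS I v \<Longrightarrow> y + z \<in> spanS I v"
proof -
  assume "y \<in> spanS I v" "z \<in> spanS I v"
  then obtain c1 c2 where "y = (\<Sum>i\<in>I. sm (c1 i) (v i))" "z = (\<Sum>i\<in>I. sm (c2 i) (v i))"
    unfolding spanS_def by blast
  then have "y + z = (\<Sum>i\<in>I. sm (c1 i + c2 i) (v i))"
    by (simp add: sm_addl sum.distrib)
  then show ?thesis using span_repr[of "\<lambda>i. c1 i + c2 i" v I] by simp
qed

lemma span_sm: "y \<in> spanS I v \<Longrightarrow> sm a y \<in> spanS I v"
proof -
  assume "y \<in> spanS I v"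
  then obtain c where "y = (\<Sum>i\<in>I. sm (c i) (v i))"
    unfolding spanS_def by blast
  then have "sm a y = (\<Sum>i\<in>I. sm (a * c i) (v i))"
    by (simp add: sm_sumr sm_sm)
  then show ?thesis using span_repr[of "\<lambda>i. a * c i" v I] by simp
qed

lemma sm_neg1: "sm (-1) x = - x"
  by (simp add: sm_minusl sm_one)

lemma span_diff: "y \<in> spanS I v \<Longrightarrow> z \<in> spanS I v \<Longrightarrow> y - z \<in> spanS I v"
  using span_add[of y I v "sm (-1) z"] span_sm[of z I v "-1"] by (simp add: sm_neg1)

lemma span_sum: "finite F \<Longrightarrow> (\<forall>j\<in>F. w j \<in> spanS I v) \<Longrightarrow> (\<Sum>j\<in>F. sm (d j) (w j)) \<in> spanS I v"
  by (induction F rule: finite_induct) (auto simp: span_zero intro!: span_add span_sm)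

lemma span_base: "finite I \<Longrightarrow> j \<in> I \<Longrightarrow> v j \<in> spanS I v"
proof -
  assume "finite I" "j \<in> I"
  have "(\<Sum>i\<in>I. sm (if i = j then 1 else 0) (v i)) = (\<Sum>i\<in>I. if i = j then v i else 0)"
    by (rule sum.cong) (auto simp: sm_one sm_zerol)
  also have "\<dots> = v j" using \<open>finite I\<close> \<open>j \<in> I\<close> by simp
  finally show ?thesis using span_repr[of "\<lambda>i. if i = j then 1 else 0" v I] by simp
qed

lemma span_trans: "finite J \<Longrightarrow> (\<forall>j\<in>J. w j \<in> spanS I v) \<Longrightarrow> spanS J w \<subseteq> spanS I v"
proof
  fix y assume fj: "finite J" and ww: "\<forall>j\<in>J. w j \<in> spanS I v" and "y \<in> spanS J w"
  then obtain c where "y = (\<Sum>j\<in>J. sm (c j) (w j))" unfolding spanS_def by blast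
  then show "y \<in> spanS I v" using span_sum[OF fj ww, of c] by simp
qed

lemma span_mono: "finite J \<Longrightarrow> I \<subseteq> J \<Longrightarrow> spanS I v \<subseteq> spanS J v"
  by (rule span_trans) (auto intro: span_base finite_subset)

lemma span_cong: "(\<forall>i\<in>I. v i = w i) \<Longrightarrow> spanS I v = spanS I w"
  unfolding spanS_def by (metis (no_types, lifting) sum.cong)

definition orthon :: "(nat \<Rightarrow> 'm) \<Rightarrow> nat \<Rightarrow> bool" where
  "orthon e d \<longleftrightarrow> (\<forall>i<d. \<forall>j<d. ip (e i) (e j) = (if i = j then 1 else 0))"

lemma ip_proj:
  assumes "orthon e d" "l < d"
  shows "ip (e l) (\<Sum>i<d. sm (c i) (e i)) = c l"
proof -
  have "ip (e l) (\<Sum>i<d. sm (c i) (e i)) = (\<Sum>i<d. c i * ip (e l) (e i))"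
    by (simp add: ip_sumr ip_smr)
  also have "\<dots> = (\<Sum>i<d. if i = l then c i else 0)"
    by (rule sum.cong) (use assms in \<open>auto simp: orthon_def\<close>)
  also have "\<dots> = c l" using assms by simp
  finally show ?thesis .
qed

lemma gram_schmidt:
  fixes v :: "'i \<Rightarrow> 'm"
  assumes "finite I"
  shows "\<exists>d e. orthon e d \<and> (\<forall>i<d. e i \<in> spanS I v) \<and> (\<forall>j\<in>I. v j \<in> spanS {..<d} e)"
  using assms
proof (induction I rule: finite_induct)
  case empty
  show ?case by (rule exI[of _ 0]) (simp add: orthon_def)
next
  case (insert j I)
  then obtain d e where o: "orthon e d" and es: "\<forall>i<d. e i \<in> spanS I v"
    and vs: "\<forall>j\<in>I. v j \<in> spanS {..<d} e" by blast
  have fin: "finite (insert j I)" using insert by simp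
  have sub: "spanS I v \<subseteq> spanS (insert j I) v" by (rule span_mono[OF fin]) auto
  have es': "\<forall>i<d. e i \<in> spanS (insert j I) v" using es sub by blast
  define p where "p = (\<Sum>i<d. sm (ip (e i) (v j)) (e i))"
  define w where "w = v j - p"
  have p_span: "p \<in> spanS {..<d} e" unfolding p_def by (rule span_repr)
  have p_span2: "p \<in> spanS (insert j I) v"
    using span_trans[of "{..<d}" e "insert j I" v] es' p_span by auto
  have ipw: "ip (e l) w = 0" if "l < d" for l
    unfolding w_def p_def using ip_proj[OF o that] by (simp add: ip_diffr)
  show ?case
  proof (cases "w = 0")
    case True
    then have "v j = p" unfolding w_def by simp
    then show ?thesis using o es' vs p_span by (intro exI[of _ d] exI[of _ e]) auto
  next
    case False
    define r where "r = nrm w"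
    have rpos: "r > 0" using False nrm_nonneg[of w] nrm_zero_iff[of w] unfolding r_def by linarith
    define e' where "e' = e(d := sm (complex_of_real (1 / sqrt r)) w)"
    have e'd: "e' d = sm (complex_of_real (1 / sqrt r)) w" unfolding e'_def by simp
    have e'l: "e' l = e l" if "l < d" for l using that unfolding e'_def by simp
    have ipwe: "ip (e' d) (e l) = 0" if "l < d" for l
      using ipw[OF that] by (simp add: e'd ip_sml ip_sym[of w "e l"])
    have ipew: "ip (e l) (e' d) = 0" if "l < d" for l
      using ipw[OF that] by (simp add: e'd ip_smr)
    have ipdd: "ip (e' d) (e' d) = 1"
    proof -
      have ww: "ip w w = complex_of_real r" by (simp add: ip_self r_def)
      have h1: "ip (e' d) (e' d) = complex_of_real (1 / sqrt r) * (cnj (complex_of_real (1 / sqrt r)) * ip w w)"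
        by (simp only: e'd ip_sml ip_smr)
      have h2: "1 / sqrt r * (1 / sqrt r * r) = 1" using rpos
        by (simp add: field_simps)
      show ?thesis unfolding h1 ww complex_cnj_complex_of_real of_real_mult[symmetric] h2 by simp
    qed
    have o': "orthon e' (Suc d)"
      unfolding orthon_def
    proof (intro allI impI)
      fix a b assume a: "a < Suc d" and b: "b < Suc d"
      show "ip (e' a) (e' b) = (if a = b then 1 else 0)"
      proof (cases "a = d")
        case True
        then show ?thesis using b ipdd ipwe[of b] e'l[of b] by (cases "b = d") auto
      next
        case False
        then have "a < d" using a by simp
        then show ?thesis using b ipew[of a] e'l o unfolding orthon_def by (cases "b = d") auto
      qed
    qed
    have span_eq: "spanS {..<d} e = spanS {..<d} e'" by (rule span_cong) (simp add: e'l)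
    have subd: "spanS {..<d} e' \<subseteq> spanS {..<Suc d} e'" by (rule span_mono) auto
    have ed_span: "e' d \<in> spanS {..<Suc d} e'" by (rule span_base) auto
    have w_span: "w \<in> spanS (insert j I) v"
      unfolding w_def by (rule span_diff[OF span_base[OF fin] p_span2]) simp
    have vj: "v j = p + sm (complex_of_real (sqrt r)) (e' d)"
    proof -
      have "sm (complex_of_real (sqrt r)) (e' d) = sm (complex_of_real (sqrt r) * complex_of_real (1 / sqrt r)) w"
        by (simp add: e'd sm_sm)
      also have "\<dots> = w" using rpos by (simp flip: of_real_mult add: sm_one)
      finally show ?thesis unfolding w_def by simp
    qed
    show ?thesis
    proof (intro exI[of _ "Suc d"] exI[of _ e'] conjI)
      show "orthon e' (Suc d)" by (rule o')
      show "\<forall>i<Suc d. e' i \<in> spanS (insert j I) v"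
        using es' e'l e'd w_span span_sm less_Suc_eq by auto
      show "\<forall>j'\<in>insert j I. v j' \<in> spanS {..<Suc d} e'"
      proof
        fix j' assume "j' \<in> insert j I"
        then show "v j' \<in> spanS {..<Suc d} e'"
        proof
          assume "j' = j"
          have "p + sm (complex_of_real (sqrt r)) (e' d) \<in> spanS {..<Suc d} e'"
            using p_span span_eq subd ed_span by (auto intro!: span_add span_sm)
          then show ?thesis using \<open>j' = j\<close> vj by simp
        next
          assume "j' \<in> I"
          then show ?thesis using vs span_eq subd by auto
        qed
      qed
    qed
  qed
qed


lemma transfer:
  fixes G :: "('g, 'b) monoid_scheme" and \<pi> :: "'g \<Rightarrow> 'm \<Rightarrow> 'm" and x :: 'm
  assumes grp: "group G" and fin: "finite (carrier G)" and kc: "kappa_const G \<mu> k"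
    and padd: "\<forall>g\<in>carrier G. \<forall>y z. \<pi> g (y + z) = \<pi> g y + \<pi> g z"
    and psm: "\<forall>g\<in>carrier G. \<forall>c y. \<pi> g (sm c y) = sm c (\<pi> g y)"
    and pip: "\<forall>g\<in>carrier G. \<forall>y z. ip (\<pi> g y) (\<pi> g z) = ip y z"
    and pmult: "\<forall>g\<in>carrier G. \<forall>h\<in>carrier G. \<forall>y. \<pi> (g \<otimes>\<^bsub>G\<^esub> h) y = \<pi> g (\<pi> h y)"
    and pone: "\<forall>y. \<pi> \<one>\<^bsub>G\<^esub> y = y"
  shows "(\<Sum>g\<in>carrier G. nrm (\<pi> g x - x)) / real (card (carrier G))
           \<le> k * (\<Sum>g\<in>carrier G. \<mu> g * nrm (\<pi> g x - x))"
proof -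
  interpret G: group G by (rule grp)
  define W where "W = spanS (carrier G) (\<lambda>h. \<pi> h x)"
  obtain d e where o: "orthon e d" and es: "\<forall>i<d. e i \<in> W"
    and vs: "\<forall>h\<in>carrier G. \<pi> h x \<in> spanS {..<d} e"
    using gram_schmidt[OF fin, of "\<lambda>h. \<pi> h x"] unfolding W_def by blast
  define L where "L = spanS {..<d} e"
  have p0: "\<pi> g 0 = 0" if "g \<in> carrier G" for g
    using padd that by (metis add_cancel_right_right add_0)
  have psum: "\<pi> g (\<Sum>i\<in>F. f i) = (\<Sum>i\<in>F. \<pi> g (f i))" if "g \<in> carrier G" for g and F :: "'i set" and f
    by (induction F rule: infinite_finite_induct) (use that padd p0 in auto)
  have pdiff: "\<pi> g (y - z) = \<pi> g y - \<pi> g z" if "g \<in> carrier G" for g y z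
    using padd that by (metis add_diff_cancel diff_add_cancel)
  have W_inv: "\<pi> g y \<in> W" if g: "g \<in> carrier G" and y: "y \<in> W" for g y
  proof -
    from y obtain c where yc: "y = (\<Sum>h\<in>carrier G. sm (c h) (\<pi> h x))" unfolding W_def spanS_def by blast
    have "\<pi> g y = (\<Sum>h\<in>carrier G. sm (c h) (\<pi> (g \<otimes>\<^bsub>G\<^esub> h) x))"
      unfolding yc using g by (simp add: psum psm pmult)
    also have "\<dots> \<in> W" unfolding W_def
      by (rule span_sum[OF fin]) (use g fin in \<open>auto intro: span_base\<close>)
    finally show ?thesis .
  qed
  have LW: "L \<subseteq> W" unfolding L_def W_def by (rule span_trans) (use es W_def in auto)
  have WL: "W \<subseteq> L" unfolding L_def W_def by (rule span_trans[OF fin]) (use vs in auto)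
  have L_inv: "\<pi> g y \<in> L" if "g \<in> carrier G" "y \<in> L" for g y
    using W_inv LW WL that by blast
  define S where "S = (\<lambda>\<xi>::nat \<Rightarrow> complex. \<Sum>i<d. sm (\<xi> i) (e i))"
  define T where "T = (\<lambda>y. (\<lambda>i. if i < d then ip (e i) y else 0))"
  have S_L: "S \<xi> \<in> L" for \<xi> unfolding S_def L_def by (rule span_repr)
  have T_vsp: "T y \<in> vsp d" for y unfolding T_def vsp_def by simp
  have TS: "T (S \<xi>) = \<xi>" if "\<xi> \<in> vsp d" for \<xi>
  proof
    fix i show "T (S \<xi>) i = \<xi> i"
      using that ip_proj[OF o] unfolding T_def S_def vsp_def by auto
  qed
  have ST: "S (T y) = y" if "y \<in> L" for y
  proof -
    from that obtain c where yc: "y = (\<Sum>i<d. sm (c i) (e i))" unfolding L_def spanS_def by blast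
    have "S (T y) = (\<Sum>i<d. sm (c i) (e i))"
      unfolding S_def by (rule sum.cong) (auto simp: T_def yc ip_proj[OF o])
    then show ?thesis using yc by simp
  qed
  have ipS: "ip (S \<xi>) (S \<eta>) = cinner d \<xi> \<eta>" for \<xi> \<eta>
  proof -
    have "ip (S \<xi>) (S \<eta>) = (\<Sum>i<d. cnj (\<xi> i) * ip (e i) (S \<eta>))"
      by (simp only: S_def[THEN fun_cong[of _ _ \<xi>]] ip_suml ip_sml)
    also have "\<dots> = (\<Sum>i<d. cnj (\<xi> i) * \<eta> i)"
      by (rule sum.cong) (auto simp: S_def ip_proj[OF o])
    finally show ?thesis by (simp add: cinner_def)
  qed
  have S_lin: "S (\<lambda>i. a * \<xi> i + b * \<eta> i) = sm a (S \<xi>) + sm b (S \<eta>)" for a b \<xi> \<eta>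
    unfolding S_def by (simp add: sm_addl sm_sm sum.distrib sm_sumr)
  have T_lin: "T (sm a y + sm b z) = (\<lambda>i. a * T y i + b * T z i)" for a b y z
    unfolding T_def by (auto simp: ip_addr ip_smr)
  have T_diff: "T (y - z) = T y - T z" for y z
    unfolding T_def by (auto simp: ip_diffr)
  define \<rho> where "\<rho> = (\<lambda>g \<xi>. T (\<pi> g (S \<xi>)))"
  have rr: "\<rho> h (\<rho> g \<xi>) = \<rho> (h \<otimes>\<^bsub>G\<^esub> g) \<xi>" if "g \<in> carrier G" "h \<in> carrier G" for g h \<xi>
    unfolding \<rho>_def using that by (simp add: ST L_inv S_L pmult)
  have R: "unitary_rep G d \<rho>"
    unfolding unitary_rep_def
  proof (intro conjI ballI allI)
    fix g assume g: "g \<in> carrier G"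
    have ig: "inv\<^bsub>G\<^esub> g \<in> carrier G" using g by simp
    have inv1: "\<rho> (inv\<^bsub>G\<^esub> g) (\<rho> g \<xi>) = \<xi>" if "\<xi> \<in> vsp d" for \<xi>
      using rr[OF g ig] g that by (simp add: \<rho>_def pone TS)
    have inv2: "\<rho> g (\<rho> (inv\<^bsub>G\<^esub> g) \<xi>) = \<xi>" if "\<xi> \<in> vsp d" for \<xi>
      using rr[OF ig g] g that by (simp add: \<rho>_def pone TS)
    show "bij_betw (\<rho> g) (vsp d) (vsp d)"
      by (rule bij_betw_byWitness[where f' = "\<rho> (inv\<^bsub>G\<^esub> g)"])
        (use inv1 inv2 T_vsp in \<open>auto simp: \<rho>_def\<close>)
    fix \<xi> \<eta> c d'
    show "\<rho> g (\<lambda>i. c * \<xi> i + d' * \<eta> i) = (\<lambda>i. c * \<rho> g \<xi> i + d' * \<rho> g \<eta> i)"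
      unfolding \<rho>_def S_lin using g by (simp add: padd psm T_lin)
  next
    fix g \<xi> \<eta> assume g: "g \<in> carrier G" and "\<xi> \<in> vsp d" "\<eta> \<in> vsp d"
    have "cinner d (\<rho> g \<xi>) (\<rho> g \<eta>) = ip (S (\<rho> g \<xi>)) (S (\<rho> g \<eta>))" by (simp add: ipS)
    also have "\<dots> = ip (\<pi> g (S \<xi>)) (\<pi> g (S \<eta>))" unfolding \<rho>_def using g by (simp add: ST L_inv S_L)
    also have "\<dots> = cinner d \<xi> \<eta>" using g pip by (simp add: ipS)
    finally show "cinner d (\<rho> g \<xi>) (\<rho> g \<eta>) = cinner d \<xi> \<eta>" .
  next
    fix g h \<xi> assume "g \<in> carrier G" "h \<in> carrier G" "\<xi> \<in> vsp d"
    then show "\<rho> (g \<otimes>\<^bsub>G\<^esub> h) \<xi> = \<rho> g (\<rho> h \<xi>)" using rr by simp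
  qed
  have xL: "x \<in> L" using vs pone unfolding L_def by (metis G.one_closed)
  define \<xi>0 where "\<xi>0 = T x"
  have x0: "\<xi>0 \<in> vsp d" unfolding \<xi>0_def by (rule T_vsp)
  have vT: "vnorm2 d (T y) = nrm y" if "y \<in> L" for y
    using ipS[of "T y" "T y"] that by (simp add: ST vnorm2_Re nrm_def)
  have each: "vnorm2 d (\<rho> g \<xi>0 - \<xi>0) = nrm (\<pi> g x - x)" if g: "g \<in> carrier G" for g
  proof -
    have "\<rho> g \<xi>0 - \<xi>0 = T (\<pi> g x - x)" unfolding \<rho>_def \<xi>0_def using xL by (simp add: ST T_diff)
    moreover have "\<pi> g x - x \<in> L" using L_inv[OF g xL] xL unfolding L_def by (rule span_diff)
    ultimately show ?thesis using vT by simp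
  qed
  have ident: "(\<Sum>g\<in>carrier G. vnorm2 d (\<rho> g \<xi>0 - \<xi>0)) = 2 * real (card (carrier G)) * vnorm2 d (\<xi>0 - inv_proj G d \<rho> \<xi>0)"
    by (rule rep_identity[OF grp fin R x0])
  have kk: "vnorm2 d (\<xi>0 - inv_proj G d \<rho> \<xi>0) \<le> k / 2 * (\<Sum>g\<in>carrier G. \<mu> g * vnorm2 d (\<rho> g \<xi>0 - \<xi>0))"
    using kc R x0 unfolding kappa_const_def by blast
  have cp: "real (card (carrier G)) > 0" using card_pos[OF grp fin R] by simp
  have "(\<Sum>g\<in>carrier G. nrm (\<pi> g x - x)) = 2 * real (card (carrier G)) * vnorm2 d (\<xi>0 - inv_proj G d \<rho> \<xi>0)"
    using ident each by simp
  moreover have "(\<Sum>g\<in>carrier G. \<mu> g * vnorm2 d (\<rho> g \<xi>0 - \<xi>0)) = (\<Sum>g\<in>carrier G. \<mu> g * nrm (\<pi> g x - x))"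
    using each by simp
  ultimately show ?thesis using kk cp by (simp add: field_simps)
qed


lemma st_one: "st 1 = 1"
proof -
  have "st 1 = st 1 * st (st 1)" by (simp only: st_st mult_1_right)
  also have "\<dots> = st (st 1 * 1)" by (simp only: st_mult)
  also have "\<dots> = 1" by (simp add: st_st)
  finally show ?thesis .
qed

lemma norm2sq_nrm: "norm2sq st tau x = nrm x"
  by (simp add: norm2sq_def nrm_def ip_def)

lemma unit_cancel: "st u * u = 1 \<Longrightarrow> st u * (u * w) = w"
  by (simp add: mult.assoc[symmetric])

lemma conj_ip:
  assumes su: "st u * u = 1"
  shows "ip (u * y * st u) (u * z * st u) = ip y z"
proof -
  have "st (u * y * st u) * (u * z * st u) = u * st y * (st u * u) * z * st u"
    by (simp add: st_mult st_st mult.assoc)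
  also have "\<dots> = u * (st y * z * st u)" using su by (simp add: mult.assoc)
  finally have e: "st (u * y * st u) * (u * z * st u) = u * (st y * z * st u)" .
  have "tau (u * (st y * z * st u)) = tau ((st y * z * st u) * u)" by (rule tau_comm)
  also have "\<dots> = tau (st y * z)" using su by (simp add: mult.assoc)
  finally show ?thesis unfolding ip_def e by simp
qed

lemma ip_sm2: "ip (sm c y) (sm c z) = (cnj c * c) * ip y z"
  by (simp add: ip_sml ip_smr)

lemma unit_hom_one:
  assumes "group A" and Uu: "U \<in> carrier A \<rightarrow> unitaries st"
    and Uh: "\<forall>a\<in>carrier A. \<forall>b\<in>carrier A. U (a \<otimes>\<^bsub>A\<^esub> b) = U a * U b"
  shows "U \<one>\<^bsub>A\<^esub> = 1"
proof -
  interpret group A by fact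
  have u: "st (U \<one>\<^bsub>A\<^esub>) * U \<one>\<^bsub>A\<^esub> = 1" using Uu by (auto simp: unitaries_def)
  have "U \<one>\<^bsub>A\<^esub> = U \<one>\<^bsub>A\<^esub> * U \<one>\<^bsub>A\<^esub>" using Uh by (metis one_closed l_one)
  then have "st (U \<one>\<^bsub>A\<^esub>) * U \<one>\<^bsub>A\<^esub> = st (U \<one>\<^bsub>A\<^esub>) * (U \<one>\<^bsub>A\<^esub> * U \<one>\<^bsub>A\<^esub>)" by simp
  then show ?thesis using u by (simp add: unit_cancel)
qed

lemma A_side:
  fixes A :: "('a, 'b) monoid_scheme" and U :: "'a \<Rightarrow> 'm"
  assumes grpA: "group A" and finA: "finite (carrier A)" and kc: "kappa_const A \<mu> k"
    and Uu: "U \<in> carrier A \<rightarrow> unitaries st"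
    and Uh: "\<forall>a\<in>carrier A. \<forall>b\<in>carrier A. U (a \<otimes>\<^bsub>A\<^esub> b) = U a * U b"
    and ch: "\<chi> \<in> characters A"
  shows "(\<Sum>a\<in>carrier A. norm2sq st tau (U a * v - sm (\<chi> a) (v * U a))) / real (card (carrier A))
     \<le> k * (\<Sum>a\<in>carrier A. \<mu> a * norm2sq st tau (U a * v - sm (\<chi> a) (v * U a)))"
proof -
  interpret A: group A by (rule grpA)
  define \<pi> where "\<pi> = (\<lambda>a y. sm (cnj (\<chi> a)) (U a * y * st (U a)))"
  have su: "st (U a) * U a = 1" "U a * st (U a) = 1" if "a \<in> carrier A" for a
    using Uu that by (auto simp: unitaries_def)
  have c1: "cnj (\<chi> a) * \<chi> a = 1" "\<chi> a * cnj (\<chi> a) = 1" if "a \<in> carrier A" for a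
    using char_cnj[OF ch that] by (auto simp: mult.commute)
  have eq: "nrm (\<pi> a v - v) = norm2sq st tau (U a * v - sm (\<chi> a) (v * U a))" if a: "a \<in> carrier A" for a
  proof -
    define D where "D = U a * v - sm (\<chi> a) (v * U a)"
    have "D * st (U a) = U a * v * st (U a) - sm (\<chi> a) (v * (U a * st (U a)))"
      unfolding D_def by (simp add: left_diff_distrib sm_multl mult.assoc)
    also have "\<dots> = U a * v * st (U a) - sm (\<chi> a) v" using su[OF a] by simp
    finally have "sm (cnj (\<chi> a)) (D * st (U a)) = \<pi> a v - sm (cnj (\<chi> a) * \<chi> a) v"
      by (simp add: sm_diffr sm_sm \<pi>_def)
    then have "\<pi> a v - v = sm (cnj (\<chi> a)) (D * st (U a))" using c1[OF a] by (simp add: sm_one)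
    then have "nrm (\<pi> a v - v) = (cmod (cnj (\<chi> a)))\<^sup>2 * nrm (D * st (U a))" by (simp add: nrm_sm)
    also have "\<dots> = nrm D" using char_norm[OF ch a] su[OF a] by (simp add: nrm_unit_right st_st)
    finally show ?thesis by (simp add: D_def norm2sq_nrm)
  qed
  have tr: "(\<Sum>g\<in>carrier A. nrm (\<pi> g v - v)) / real (card (carrier A))
           \<le> k * (\<Sum>g\<in>carrier A. \<mu> g * nrm (\<pi> g v - v))"
  proof (rule transfer[OF grpA finA kc])
    show "\<forall>g\<in>carrier A. \<forall>y z. \<pi> g (y + z) = \<pi> g y + \<pi> g z"
      by (simp add: \<pi>_def distrib_left distrib_right sm_addr)
    show "\<forall>g\<in>carrier A. \<forall>c y. \<pi> g (sm c y) = sm c (\<pi> g y)"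
      by (simp add: \<pi>_def sm_multl sm_multr sm_sm mult.commute)
    show "\<forall>g\<in>carrier A. \<forall>y z. ip (\<pi> g y) (\<pi> g z) = ip y z"
      using c1 su by (simp add: \<pi>_def ip_sm2 conj_ip)
    show "\<forall>g\<in>carrier A. \<forall>h\<in>carrier A. \<forall>y. \<pi> (g \<otimes>\<^bsub>A\<^esub> h) y = \<pi> g (\<pi> h y)"
      using Uh char_mult[OF ch] by (simp add: \<pi>_def sm_multl sm_multr sm_sm st_mult mult.assoc)
    show "\<forall>y. \<pi> \<one>\<^bsub>A\<^esub> y = y"
      using unit_hom_one[OF grpA Uu Uh] char_one[OF grpA ch] by (simp add: \<pi>_def st_one sm_one)
  qed
  show ?thesis using tr eq by simp
qed

lemma B_side:
  fixes A :: "('a, 'b) monoid_scheme" and V :: "('a \<Rightarrow> complex) \<Rightarrow> 'm"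
  assumes grpA: "group A" and finC: "finite (characters A)" and kc: "kappa_const (dual_group A) \<nu> k"
    and Vu: "V \<in> characters A \<rightarrow> unitaries st"
    and Vh: "\<forall>\<chi>\<in>characters A. \<forall>\<psi>\<in>characters A. V (\<chi> \<otimes>\<^bsub>dual_group A\<^esub> \<psi>) = V \<chi> * V \<psi>"
    and a: "a \<in> carrier A"
  shows "(\<Sum>\<chi>\<in>characters A. norm2sq st tau (u * V \<chi> - sm (\<chi> a) (V \<chi> * u))) / real (card (characters A))
     \<le> k * (\<Sum>\<chi>\<in>characters A. \<nu> \<chi> * norm2sq st tau (u * V \<chi> - sm (\<chi> a) (V \<chi> * u)))"
proof -
  have grpD: "group (dual_group A)" by (rule dual_group[OF grpA])
  have finD: "finite (carrier (dual_group A))" using finC by (simp add: dual_carrier)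
  define \<pi> where "\<pi> = (\<lambda>\<chi> y. sm (cnj (\<chi> a)) (st (V \<chi>) * y * V \<chi>))"
  have su: "st (V \<chi>) * V \<chi> = 1" "V \<chi> * st (V \<chi>) = 1" if "\<chi> \<in> characters A" for \<chi>
    using Vu that by (auto simp: unitaries_def)
  have c1: "cnj (\<chi> a) * \<chi> a = 1" "\<chi> a * cnj (\<chi> a) = 1" if "\<chi> \<in> characters A" for \<chi>
    using char_cnj[OF that a] by (auto simp: mult.commute)
  have comm: "V \<chi> * V \<psi> = V \<psi> * V \<chi>" if "\<chi> \<in> characters A" "\<psi> \<in> characters A" for \<chi> \<psi>
  proof -
    have "\<chi> \<otimes>\<^bsub>dual_group A\<^esub> \<psi> = \<psi> \<otimes>\<^bsub>dual_group A\<^esub> \<chi>" by (simp add: dual_mult mult.commute)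
    then show ?thesis using Vh that by metis
  qed
  have eq: "nrm (\<pi> \<chi> u - u) = norm2sq st tau (u * V \<chi> - sm (\<chi> a) (V \<chi> * u))" if ch: "\<chi> \<in> characters A" for \<chi>
  proof -
    define D where "D = u * V \<chi> - sm (\<chi> a) (V \<chi> * u)"
    have "st (V \<chi>) * D = st (V \<chi>) * u * V \<chi> - sm (\<chi> a) (st (V \<chi>) * V \<chi> * u)"
      unfolding D_def by (simp add: right_diff_distrib sm_multr mult.assoc)
    also have "\<dots> = st (V \<chi>) * u * V \<chi> - sm (\<chi> a) u" using su[OF ch] by simp
    finally have "sm (cnj (\<chi> a)) (st (V \<chi>) * D) = \<pi> \<chi> u - sm (cnj (\<chi> a) * \<chi> a) u"
      by (simp add: sm_diffr sm_sm \<pi>_def)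
    then have "\<pi> \<chi> u - u = sm (cnj (\<chi> a)) (st (V \<chi>) * D)" using c1[OF ch] by (simp add: sm_one)
    then have "nrm (\<pi> \<chi> u - u) = (cmod (cnj (\<chi> a)))\<^sup>2 * nrm (st (V \<chi>) * D)" by (simp add: nrm_sm)
    also have "\<dots> = nrm D" using char_norm[OF ch a] su[OF ch] by (simp add: nrm_unit_left st_st)
    finally show ?thesis by (simp add: D_def norm2sq_nrm)
  qed
  have tr: "(\<Sum>g\<in>carrier (dual_group A). nrm (\<pi> g u - u)) / real (card (carrier (dual_group A)))
           \<le> k * (\<Sum>g\<in>carrier (dual_group A). \<nu> g * nrm (\<pi> g u - u))"
  proof (rule transfer[OF grpD finD kc])
    show "\<forall>g\<in>carrier (dual_group A). \<forall>y z. \<pi> g (y + z) = \<pi> g y + \<pi> g z"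
      by (simp add: \<pi>_def distrib_left distrib_right sm_addr)
    show "\<forall>g\<in>carrier (dual_group A). \<forall>c y. \<pi> g (sm c y) = sm c (\<pi> g y)"
      by (simp add: \<pi>_def sm_multl sm_multr sm_sm mult.commute)
    show "\<forall>g\<in>carrier (dual_group A). \<forall>y z. ip (\<pi> g y) (\<pi> g z) = ip y z"
    proof (intro ballI allI)
      fix g y z assume g: "g \<in> carrier (dual_group A)"
      then have g': "g \<in> characters A" by (simp add: dual_carrier)
      have "ip (\<pi> g y) (\<pi> g z) = ip (st (V g) * y * st (st (V g))) (st (V g) * z * st (st (V g)))"
        using c1[OF g'] by (simp add: \<pi>_def ip_sm2 st_st)
      also have "\<dots> = ip y z" by (rule conj_ip) (simp add: st_st su[OF g'])
      finally show "ip (\<pi> g y) (\<pi> g z) = ip y z" .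
    qed
    show "\<forall>g\<in>carrier (dual_group A). \<forall>h\<in>carrier (dual_group A). \<forall>y. \<pi> (g \<otimes>\<^bsub>dual_group A\<^esub> h) y = \<pi> g (\<pi> h y)"
    proof (intro ballI allI)
      fix g h y assume "g \<in> carrier (dual_group A)" "h \<in> carrier (dual_group A)"
      then have g: "g \<in> characters A" and h: "h \<in> characters A" by (auto simp: dual_carrier)
      have V: "V (g \<otimes>\<^bsub>dual_group A\<^esub> h) = V h * V g" using Vh g h comm by simp
      have gh: "(g \<otimes>\<^bsub>dual_group A\<^esub> h) a = g a * h a" using a by (simp add: dual_mult)
      show "\<pi> (g \<otimes>\<^bsub>dual_group A\<^esub> h) y = \<pi> g (\<pi> h y)"
        unfolding \<pi>_def V gh by (simp add: sm_multl sm_multr sm_sm st_mult mult.assoc)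
    qed
    show "\<forall>y. \<pi> \<one>\<^bsub>dual_group A\<^esub> y = y"
    proof
      fix y
      have "V \<one>\<^bsub>dual_group A\<^esub> = 1"
        by (rule unit_hom_one[OF grpD]) (use Vu Vh in \<open>auto simp: dual_carrier\<close>)
      then show "\<pi> \<one>\<^bsub>dual_group A\<^esub> y = y" using a by (simp add: \<pi>_def dual_one st_one sm_one)
    qed
  qed
  show ?thesis using tr eq by (simp add: dual_carrier)
qed

end

theorem corollary2p5:
  fixes A :: "('a, 'b) monoid_scheme"
    and \<mu> :: "'a \<Rightarrow> real" and \<nu> :: "('a \<Rightarrow> complex) \<Rightarrow> real"
    and sm :: "complex \<Rightarrow> 'm::ring_1 \<Rightarrow> 'm" and st :: "'m \<Rightarrow> 'm" and tau :: "'m \<Rightarrow> complex"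
    and U :: "'a \<Rightarrow> 'm" and V :: "('a \<Rightarrow> complex) \<Rightarrow> 'm" and \<epsilon> :: real
  assumes "comm_group A" and "finite (carrier A)"
    and "prob_on (carrier A) \<mu>" and "prob_on (characters A) \<nu>"
    and "tracial_star_algebra sm st tau"
    and "U \<in> carrier A \<rightarrow> unitaries st"
    and "\<forall>a\<in>carrier A. \<forall>b\<in>carrier A. U (a \<otimes>\<^bsub>A\<^esub> b) = U a * U b"
    and "V \<in> characters A \<rightarrow> unitaries st"
    and "\<forall>\<chi>\<in>characters A. \<forall>\<psi>\<in>characters A.
           V (\<chi> \<otimes>\<^bsub>dual_group A\<^esub> \<psi>) = V \<chi> * V \<psi>"
    and "(\<Sum>a\<in>carrier A. \<Sum>\<chi>\<in>characters A.
           \<mu> a * \<nu> \<chi> * norm2sq st tau (U a * V \<chi> - sm (\<chi> a) (V \<chi> * U a))) \<le> \<epsilon>"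
  shows "kappa A \<mu> = \<infinity> \<or> kappa (dual_group A) \<nu> = \<infinity> \<or>
         (\<Sum>a\<in>carrier A. \<Sum>\<chi>\<in>characters A.
             norm2sq st tau (U a * V \<chi> - sm (\<chi> a) (V \<chi> * U a)))
           / real (card (carrier A) * card (characters A))
         \<le> real_of_ereal (kappa A \<mu>) * real_of_ereal (kappa (dual_group A) \<nu>) * \<epsilon>"
proof -
  note T = assms(5)
  let ?f = "\<lambda>a \<chi>. norm2sq st tau (U a * V \<chi> - sm (\<chi> a) (V \<chi> * U a))"
  show ?thesis
  proof (cases "kappa A \<mu> = \<infinity> \<or> kappa (dual_group A) \<nu> = \<infinity>")
    case True then show ?thesis by blast
  next
    case False
    have grpA: "group A" using assms(1) by (rule comm_group.axioms(2))
    have finA: "finite (carrier A)" by (rule assms(2))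
    have mu: "\<forall>a\<in>carrier A. 0 \<le> \<mu> a" using assms(3) by (simp add: prob_on_def)
    have nu: "\<forall>\<chi>\<in>characters A. 0 \<le> \<nu> \<chi>" using assms(4) by (simp add: prob_on_def)
    have s1: "sum \<nu> (characters A) = 1" using assms(4) by (simp add: prob_on_def)
    have finC: "finite (characters A)" using s1 by (metis sum.infinite zero_neq_one)
    have neC: "characters A \<noteq> {}" using s1 by auto
    have neA: "carrier A \<noteq> {}" using monoid.one_closed[OF group.is_monoid[OF grpA]] by auto
    have NA: "real (card (carrier A)) > 0" using finA neA by (simp add: card_gt_0_iff)
    have NC: "real (card (characters A)) > 0" using finC neC by (simp add: card_gt_0_iff)
    define kA where "kA = real_of_ereal (kappa A \<mu>)"
    define kB where "kB = real_of_ereal (kappa (dual_group A) \<nu>)"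
    have kcA: "kappa_const A \<mu> kA" and kA0: "0 \<le> kA"
      using kappa_real[of A \<mu>] False mu unfolding kA_def by auto
    have kcB: "kappa_const (dual_group A) \<nu> kB" and kB0: "0 \<le> kB"
      using kappa_real[of "dual_group A" \<nu>] False nu unfolding kB_def by (auto simp: dual_carrier)
    have hA: "(\<Sum>a\<in>carrier A. ?f a \<chi>) / real (card (carrier A)) \<le> kA * (\<Sum>a\<in>carrier A. \<mu> a * ?f a \<chi>)"
      if "\<chi> \<in> characters A" for \<chi>
      by (rule A_side[OF T grpA finA kcA assms(6) assms(7) that])
    have hB: "(\<Sum>\<chi>\<in>characters A. ?f a \<chi>) / real (card (characters A)) \<le> kB * (\<Sum>\<chi>\<in>characters A. \<nu> \<chi> * ?f a \<chi>)"
      if "a \<in> carrier A" for a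
      by (rule B_side[OF T grpA finC kcB assms(8) assms(9) that])
    have "(\<Sum>a\<in>carrier A. \<Sum>\<chi>\<in>characters A. ?f a \<chi>) / real (card (carrier A) * card (characters A))
        = (\<Sum>\<chi>\<in>characters A. (\<Sum>a\<in>carrier A. ?f a \<chi>) / real (card (carrier A))) / real (card (characters A))"
      by (simp add: sum.swap[of _ "carrier A"] sum_divide_distrib[symmetric] divide_divide_eq_left)
    also have "\<dots> \<le> (\<Sum>\<chi>\<in>characters A. kA * (\<Sum>a\<in>carrier A. \<mu> a * ?f a \<chi>)) / real (card (characters A))"
      by (intro divide_right_mono sum_mono) (use hA in auto)
    also have "\<dots> = kA * (\<Sum>a\<in>carrier A. \<mu> a * ((\<Sum>\<chi>\<in>characters A. ?f a \<chi>) / real (card (characters A))))"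
      by (simp add: sum_distrib_left sum_divide_distrib sum.swap[of _ "characters A"] mult_ac)
    also have "\<dots> \<le> kA * (\<Sum>a\<in>carrier A. \<mu> a * (kB * (\<Sum>\<chi>\<in>characters A. \<nu> \<chi> * ?f a \<chi>)))"
      by (intro mult_left_mono sum_mono) (use hB mu kA0 in auto)
    also have "\<dots> = kA * kB * (\<Sum>a\<in>carrier A. \<Sum>\<chi>\<in>characters A. \<mu> a * \<nu> \<chi> * ?f a \<chi>)"
      by (simp add: sum_distrib_left mult_ac)
    also have "\<dots> \<le> kA * kB * \<epsilon>"
      using assms(10) kA0 kB0 by (intro mult_left_mono) auto
    finally show ?thesis unfolding kA_def kB_def by blast
  qed
qed

end
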